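(* Let $d$ and $K$ be positive integers, and for $k=1,\ldots,K$ let $\{a_{k,n}\}_{n=1}^\infty$ and $\{b_{k,n}\}_{n=1}^\infty$ be sequences of non-zero integers such that the partial sums $\alpha_{k,N}=\sum_{n=1}^N\frac{b_{k,n}}{a_{k,n}}$ converge as $N\to\infty$; write $\alpha_k=\lim_{N\to\infty}\alpha_{k,N}$. Let $\varepsilon,\kappa$ be positive reals with $\kappa<1$, and suppose there is a sequence $\{a_n\}_{n=1}^\infty$ of integers such that for all $k=1,\ldots,K$ and $n\in\mathbb N$, \[ n^{1+\varepsilon}\le a_n\le a_{n+1},\quad a_n2^{-(\log_2 a_n)^\kappa}\le|a_{k,n}|\le\max\big\{a_n2^{(\log_2 a_n)^\kappa},2^{n^{-3}(Kd+1)^n}\big\},\quad |b_{k,n}|\le 2^{(\log_2 a_n)^\kappa},\] and $\limsup_{n\to\infty}a_n^{1/(Kd+1)^n}=\infty$. Let $P\in\mathbb Z[x_1,\ldots,x_K]$ be a polynomial of degree at most $d$. If $P(\alpha_{1,N},\ldots,\alpha_{K,N})\ne0$ for all sufficiently large $N$, then $P(\alpha_1,\ldots,\alpha_K)\ne0$. *)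

theory Defs
  imports "HOL-Analysis.Analysis"
begin

text \<open>Polynomials in \<open>\<int>[x_1,...,x_K]\<close> of total degree at most d are represented by their
  integer coefficient function on exponent vectors \<open>e\<close> (supported on \<open>{1..K}\<close>) of total
  degree at most d.\<close>

definition degvecs :: "nat \<Rightarrow> nat \<Rightarrow> (nat \<Rightarrow> nat) set" where
  "degvecs K d = {e. (\<forall>k. e k \<noteq> 0 \<longrightarrow> k \<in> {1..K}) \<and> (\<Sum>k=1..K. e k) \<le> d}"

definition mpoly_eval :: "nat \<Rightarrow> nat \<Rightarrow> ((nat \<Rightarrow> nat) \<Rightarrow> int) \<Rightarrow> (nat \<Rightarrow> real) \<Rightarrow> real" where
  "mpoly_eval K d c x = (\<Sum>e\<in>degvecs K d. real_of_int (c e) * (\<Prod>k=1..K. x k ^ e k))"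

definition partial_alpha :: "(nat \<Rightarrow> nat \<Rightarrow> int) \<Rightarrow> (nat \<Rightarrow> nat \<Rightarrow> int) \<Rightarrow> nat \<Rightarrow> nat \<Rightarrow> real" where
  "partial_alpha a b k N = (\<Sum>n=1..N. real_of_int (b k n) / real_of_int (a k n))"

end

theory Submission
  imports Defs
begin

lemma powr_le_lin:
  fixes \<kappa> \<delta> :: real
  assumes "0<\<kappa>" "\<kappa><1" "\<delta>>0"
  shows "\<exists>C\<ge>0. \<forall>x\<ge>0. x powr \<kappa> \<le> \<delta>*x + C"
proof -
  define X0 where "X0 = \<delta> powr (-1/(1-\<kappa>))"
  have X0p: "X0 > 0" using assms unfolding X0_def by simp
  have X0e: "X0 powr (\<kappa>-1) = \<delta>"
  proof -
    have e: "-1/(1-\<kappa>) * (\<kappa>-1) = 1" using assms by (simp add: field_simps)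
    have "X0 powr (\<kappa>-1) = \<delta> powr (-1/(1-\<kappa>) * (\<kappa>-1))" unfolding X0_def by (simp add: powr_powr)
    then show ?thesis using e assms(3) by simp
  qed
  show ?thesis
  proof (intro exI[of _ "X0 powr \<kappa>"] conjI allI impI)
    show "0 \<le> X0 powr \<kappa>" by simp
    fix x :: real assume x: "x \<ge> 0"
    show "x powr \<kappa> \<le> \<delta> * x + X0 powr \<kappa>"
    proof (cases "x \<le> X0")
      case True
      then have "x powr \<kappa> \<le> X0 powr \<kappa>" using x assms by (intro powr_mono2) auto
      then show ?thesis using x assms by (smt (verit) mult_nonneg_nonneg)
    next
      case False
      then have xp: "x > 0" using X0p by simp
      have "x powr (\<kappa>-1) \<le> X0 powr (\<kappa>-1)" using False X0p assms
        by (intro powr_mono2') auto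
      then have "x * x powr (\<kappa>-1) \<le> x * \<delta>" using X0e xp by (simp add: mult_left_mono)
      moreover have "x * x powr (\<kappa>-1) = x powr \<kappa>" using xp
        by (simp add: powr_diff powr_minus divide_simps)
      ultimately show ?thesis by (smt (verit) powr_ge_zero mult.commute)
    qed
  qed
qed

lemma telescope_inv:
  fixes N j :: nat assumes "1 \<le> N" "N \<le> j"
  shows "(\<Sum>n\<in>{Suc N..j}. 1 / (real (n-1) * real n)) = 1/N - 1/j"
  using assms(2)
proof (induction j rule: dec_induct)
  case base then show ?case by simp
next
  case (step j)
  have jN: "N \<le> j" using step by simp
  have "{Suc N..Suc j} = insert (Suc j) {Suc N..j}" using jN by auto
  then have "(\<Sum>n\<in>{Suc N..Suc j}. 1 / (real (n-1) * real n)) =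
     1/(real j * real (Suc j)) + (\<Sum>n\<in>{Suc N..j}. 1 / (real (n-1) * real n))" by simp
  also have "\<dots> = 1/(real j * real (Suc j)) + (1/N - 1/j)" using step.IH by simp
  also have "\<dots> = 1/N - 1/Suc j"
  proof -
    have jp: "real j > 0" using jN assms(1) by simp
    have "1/(real j * real (Suc j)) = 1/real j - 1/real (Suc j)" using jp by (simp add: field_simps)
    then show ?thesis by linarith
  qed
  finally show ?case .
qed

lemma sq_le_pow: "real (l*l) \<le> 2 * 2^l"
proof (induction l)
  case 0 then show ?case by simp
next
  case (Suc l)
  show ?case
  proof (cases "l \<le> 2")
    case True then show ?thesis by (cases l; cases "l-1"; auto)
  next
    case False
    have "real (Suc l * Suc l) = real (l*l) + 2*l + 1" by simp
    also have "\<dots> \<le> 2 * real (l*l)"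
    proof -
      have "real l \<ge> 3" using False by simp
      then have "real l * real l \<ge> 3 * real l" by (intro mult_right_mono) auto
      moreover have "real (l*l) = real l * real l" by simp
      ultimately show ?thesis using \<open>real l \<ge> 3\<close> by linarith
    qed
    also have "\<dots> \<le> 2 * (2*2^l)" using Suc by simp
    finally show ?thesis by simp
  qed
qed

lemma mpow_powr:
  fixes m \<kappa> :: real assumes "m > 0"
  shows "(m^N) powr \<kappa> = (m powr \<kappa>)^N"
proof -
  have "(m^N) powr \<kappa> = (m powr real N) powr \<kappa>" using assms by (simp add: powr_realpow)
  also have "\<dots> = (m powr \<kappa>) powr real N" by (simp add: powr_powr mult.commute)
  also have "\<dots> = (m powr \<kappa>)^N" using assms by (simp add: powr_realpow)
  finally show ?thesis .
qed

lemma npow3_le: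
  fixes n :: nat assumes "n \<ge> 2"
  shows "real n powr (-3) \<le> 1 / (real (n-1) * real n)"
proof -
  have np: "real n > 0" using assms by simp
  have "real n powr (-3) = 1 / real n ^ 3" using np by (simp add: powr_minus powr_numeral divide_simps)
  moreover have "real (n-1) * real n \<le> real n ^ 3"
  proof -
    have "real (n-1) \<le> real n" by simp
    also have "\<dots> \<le> real n * real n" using assms by simp
    finally have "real (n-1) * real n \<le> (real n * real n) * real n" using np by (intro mult_right_mono) auto
    then show ?thesis by (simp add: power3_eq_cube)
  qed
  moreover have "real (n-1) * real n > 0" using assms by simp
  ultimately show ?thesis by (metis divide_left_mono mult_pos_pos zero_less_power zero_le_one np)
qed

lemma pure_step:
  fixes u z :: "nat \<Rightarrow> real" and m \<kappa> \<theta> c D C1 :: real and N j :: nat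
  assumes m2: "m \<ge> 2" and k0: "0<\<kappa>" and k1: "\<kappa><1" and th: "\<theta>>0" and c0: "c\<ge>0"
    and C1: "C1 \<ge> 0" and lin: "\<forall>x\<ge>0. x powr \<kappa> \<le> \<theta>/4*x + C1"
    and D_def: "D = 2/\<theta>*(m-1+c+2*C1) + 1"
    and N1: "N \<ge> 1" and Nj: "N < j"
    and u0: "\<forall>n\<ge>1. 0 \<le> u n" and umono: "\<forall>n j. 1 \<le> n \<longrightarrow> n \<le> j \<longrightarrow> u n \<le> u j"
    and zdef: "\<forall>N. z N = (\<Sum>n=1..N. u n + u n powr \<kappa> + real n powr (-3) * m^n)"
    and w1: "u j - 2 * u j powr \<kappa> \<le> (m-1) * z N + c + real (j-N)"
    and w2: "\<theta> * u j - 2 * u j powr \<kappa> \<le> (m-1) * z N + c"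
  shows "u j \<le> D*(1 + z N/m^N)*m^N"
    and "z j/m^j + 1/j \<le> z N/m^N + 1/N + (2*(c+1)+6*D)*(1+z N/m^N)*((m powr \<kappa>)/m)^N"
proof -
  define r where "r = z N / m^N"
  define U where "U = u j"
  define l where "l = j - N"
  define \<mu> where "\<mu> = m powr \<kappa>"
  have mNp: "m^N > 0" using m2 by simp
  have zN0: "z N \<ge> 0" unfolding zdef[rule_format]
    using u0 m2 by (intro sum_nonneg) auto
  have r0: "r \<ge> 0" unfolding r_def using zN0 mNp by simp
  have m0: "m \<noteq> 0" using m2 by simp
  have zNr: "z N = r * m^N" unfolding r_def using m0 by simp
  have U0: "U \<ge> 0" unfolding U_def using u0 N1 Nj by simp
  have mN1: "m^N \<ge> 1" using m2 by (simp add: one_le_power)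
  have T1: "(1+r)*m^N \<ge> 1"
  proof -
    have "1*1 \<le> (1+r)*m^N" using r0 mN1 by (intro mult_mono) auto
    then show ?thesis by simp
  qed
  have hU1: "U \<le> 2/\<theta>*((m-1)*z N + c + 2*C1)"
  proof -
    have "U powr \<kappa> \<le> \<theta>/4*U + C1" using lin U0 by simp
    then have "\<theta>/2 * U \<le> (m-1)*z N + c + 2*C1" using w2 unfolding U_def by linarith
    then have "2/\<theta> * (\<theta>/2 * U) \<le> 2/\<theta>*((m-1)*z N + c + 2*C1)" using th
      by (intro mult_left_mono) auto
    then show ?thesis using th by simp
  qed
  have hY: "(m-1)*z N + c + 2*C1 \<le> (m-1+c+2*C1)*((1+r)*m^N)"
  proof -
    have "z N \<le> (1+r)*m^N" using zNr mNp by (simp add: algebra_simps)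
    then have a: "(m-1)*z N \<le> (m-1)*((1+r)*m^N)" using m2 by (intro mult_left_mono) auto
    have b: "c \<le> c*((1+r)*m^N)" using c0 T1 by (simp add: mult_le_cancel_left1)
    have cc: "2*C1 \<le> 2*C1*((1+r)*m^N)" using C1 T1 by (simp add: mult_le_cancel_left1)
    show ?thesis using a b cc by (simp add: algebra_simps)
  qed
  have Dp: "D \<ge> 1" unfolding D_def using th m2 c0 C1 by simp
  have hUD: "U \<le> D*(1+r)*m^N"
  proof -
    have "2/\<theta>*((m-1)*z N + c + 2*C1) \<le> 2/\<theta>*((m-1+c+2*C1)*((1+r)*m^N))" using hY th
      by (intro mult_left_mono) auto
    then have "U \<le> 2/\<theta>*((m-1+c+2*C1)*((1+r)*m^N))" using hU1 by linarith
    also have "\<dots> \<le> D*(1+r)*m^N"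
    proof -
      define X where "X = 2/\<theta>*(m-1+c+2*C1)"
      have DX: "D = X + 1" unfolding D_def X_def by simp
      have "D*(1+r)*m^N = X*((1+r)*m^N) + (1+r)*m^N"
        unfolding DX by (simp add: algebra_simps)
      moreover have "2/\<theta>*((m-1+c+2*C1)*((1+r)*m^N)) = X*((1+r)*m^N)" unfolding X_def by simp
      ultimately show ?thesis using T1 by linarith
    qed
    finally show ?thesis .
  qed
  then show "u j \<le> D*(1 + z N/m^N)*m^N" unfolding U_def r_def .
  have hG: "U powr \<kappa> \<le> D*(1+r)*\<mu>^N"
  proof -
    have "U powr \<kappa> \<le> (D*(1+r)*m^N) powr \<kappa>" using hUD U0 k0 by (intro powr_mono2) auto
    also have "\<dots> = (D*(1+r)) powr \<kappa> * (m^N) powr \<kappa>" using Dp r0 mNp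
      by (subst powr_mult) auto
    also have "(m^N) powr \<kappa> = \<mu>^N" unfolding \<mu>_def using m2 by (simp add: mpow_powr)
    also have "(D*(1+r)) powr \<kappa> \<le> (D*(1+r)) powr 1"
    proof -
      have "1*1 \<le> D*(1+r)" using Dp r0 by (intro mult_mono) auto
      then show ?thesis using k1 by (intro powr_mono) auto
    qed
    also have "(D*(1+r)) powr 1 = D*(1+r)" using Dp r0 by simp
    finally show ?thesis using \<mu>_def by (simp add: mult_right_mono)
  qed
  define G where "G = D*(1+r)*\<mu>^N"
  have hU2: "U \<le> (m-1)*z N + c + real l + 2*G" using w1 hG unfolding U_def G_def l_def by linarith
  have jsplit: "j = N + l" unfolding l_def using Nj by simp
  have zj: "z j = z N + (\<Sum>n=N+1..j. u n + u n powr \<kappa> + real n powr (-3) * m^n)"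
    unfolding zdef[rule_format] jsplit by (rule sum.ub_add_nat) simp
  have termb: "u n + u n powr \<kappa> + real n powr (-3) * m^n \<le> U + G + m^j * (1 / (real (n-1) * real n))"
    if n: "n \<in> {N+1..j}" for n
  proof -
    have a: "u n \<le> U" unfolding U_def using umono n N1 by auto
    have un0: "0 \<le> u n" using u0 n N1 by auto
    have "u n powr \<kappa> \<le> U powr \<kappa>" using a un0 k0 by (intro powr_mono2) auto
    then have b: "u n powr \<kappa> \<le> G" unfolding G_def using hG by linarith
    have c3: "real n powr (-3) \<le> 1 / (real (n-1) * real n)" using n N1 by (intro npow3_le) auto
    have mm: "m^n \<le> m^j" using n m2 by (intro power_increasing) auto
    have "real n powr (-3) * m^n \<le> 1 / (real (n-1) * real n) * m^j"
      using c3 mm m2 by (intro mult_mono) auto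
    then show ?thesis using a b by (simp add: mult.commute)
  qed
  have sumb: "(\<Sum>n=N+1..j. u n + u n powr \<kappa> + real n powr (-3) * m^n) \<le> real l * (U+G) + m^j*(1/N - 1/j)"
  proof -
    have "(\<Sum>n=N+1..j. u n + u n powr \<kappa> + real n powr (-3) * m^n) \<le> (\<Sum>n=N+1..j. U + G + m^j * (1 / (real (n-1) * real n)))"
      by (rule sum_mono) (rule termb)
    also have "\<dots> = real l * (U+G) + m^j * (\<Sum>n=N+1..j. 1 / (real (n-1) * real n))"
      by (simp add: sum.distrib sum_distrib_left l_def)
    also have "(\<Sum>n=N+1..j. 1 / (real (n-1) * real n)) = 1/N - 1/j" using telescope_inv[of N j] N1 Nj by simp
    finally show ?thesis .
  qed
  have mj: "m^j = m^N * m^l" unfolding jsplit by (simp add: power_add)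
  have \<mu>1: "\<mu> \<ge> 1" unfolding \<mu>_def using m2 k0 by (simp add: ge_one_powr_ge_zero)
  have \<mu>N1: "\<mu>^N \<ge> 1" using \<mu>1 by (simp add: one_le_power)
  have ml: "real l * real l \<le> 2 * m^l"
  proof -
    have "real (l*l) \<le> 2*2^l" by (rule sq_le_pow)
    also have "(2::real)^l \<le> m^l" using m2 by (intro power_mono) auto
    finally show ?thesis by simp
  qed
  have l1: "real l \<ge> 1" unfolding l_def using Nj by simp
  have ll: "real l \<le> real l * real l" using l1 mult_left_mono[of 1 "real l" "real l"] by simp
  have ml2: "real l \<le> 2 * m^l" using ml ll by linarith
  define E where "E = 2*(c+1)+6*D"
  have bern: "1 + real l * (m-1) \<le> m^l" using Bernoulli_inequality[of "m-1" l] m2 by simp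
  have key: "z j \<le> m^j * (r + E*(1+r)*(\<mu>/m)^N) + m^j*(1/N - 1/j)"
  proof -
    have "real l*(U+G) \<le> real l*((m-1)*z N + c + real l + 3*G)" using hU2 by (intro mult_left_mono) auto
    then have "z j \<le> z N + real l * ((m-1)*z N + c + real l + 3*G) + m^j*(1/N - 1/j)"
      using zj sumb by linarith
    also have "\<dots> = z N * (1 + real l*(m-1)) + real l*(c + real l) + 3*real l*G + m^j*(1/N - 1/j)"
      by (simp add: algebra_simps)
    also have "z N * (1 + real l*(m-1)) \<le> m^j * r"
    proof -
      have "z N * (1 + real l*(m-1)) \<le> z N * m^l" using bern zN0 by (intro mult_left_mono) auto
      moreover have "m^j * r = z N * m^l" by (simp add: mj zNr algebra_simps)
      ultimately show ?thesis by simp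
    qed
    also have "real l*(c + real l) \<le> m^j * (2*(c+1)*(1+r)*(\<mu>/m)^N)"
    proof -
      have "real l * c \<le> (real l*real l)*c" by (rule mult_right_mono[OF ll c0])
      then have "real l*(c + real l) \<le> (c+1)*(real l * real l)"
        by (simp add: algebra_simps)
      also have "\<dots> \<le> (c+1)*(2*m^l)" using ml c0 by (intro mult_left_mono) auto
      also have "\<dots> \<le> (c+1)*(2*m^l) * ((1+r)*\<mu>^N)"
      proof -
        have q1: "1*1 \<le> (1+r)*\<mu>^N" using r0 \<mu>N1 by (intro mult_mono) auto
        have "(c+1)*(2*m^l) * 1 \<le> (c+1)*(2*m^l) * ((1+r)*\<mu>^N)" using q1 c0 m2
          by (intro mult_left_mono) auto
        then show ?thesis by simp
      qed
      also have "\<dots> = m^j * (2*(c+1)*(1+r)*(\<mu>/m)^N)" using mj mNp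
        using m0 by (simp add: power_divide field_simps)
      finally show ?thesis .
    qed
    also have "3*real l*G \<le> m^j * (6*D*(1+r)*(\<mu>/m)^N)"
    proof -
      have "3*real l*G \<le> 3*(2*m^l)*G" using ml2 unfolding G_def using Dp r0 \<mu>N1
        by (intro mult_right_mono) auto
      also have "\<dots> = m^j * (6*D*(1+r)*(\<mu>/m)^N)" unfolding G_def using mj mNp
        using m0 by (simp add: power_divide field_simps)
      finally show ?thesis .
    qed
    finally show ?thesis unfolding E_def by (simp add: algebra_simps)
  qed
  have mjp: "m^j > 0" using m2 by simp
  define Q where "Q = r + E*(1+r)*(\<mu>/m)^N + (1/N - 1/j)"
  have "m^j*(r + E*(1+r)*(\<mu>/m)^N) + m^j*(1/N - 1/j) = Q * m^j" unfolding Q_def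
    by (simp only: distrib_left[symmetric] mult.commute)
  with key have "z j \<le> Q * m^j" by simp
  then have "z j / m^j \<le> Q" by (subst pos_divide_le_eq[OF mjp])
  then have "z j / m^j \<le> r + E*(1+r)*(\<mu>/m)^N + (1/N - 1/j)" unfolding Q_def .
  then show "z j/m^j + 1/j \<le> z N/m^N + 1/N + (2*(c+1)+6*D)*(1+z N/m^N)*((m powr \<kappa>)/m)^N"
    unfolding r_def E_def \<mu>_def by simp
qed


lemma pure:
  fixes u z :: "nat \<Rightarrow> real" and m \<kappa> \<theta> c :: real and N0 :: nat
  assumes m2: "m \<ge> 2" and k0: "0<\<kappa>" and k1: "\<kappa><1" and th: "\<theta>>0" and c0: "c\<ge>0"
    and N0: "N0 \<ge> 1"
    and u0: "\<forall>n\<ge>1. 0 \<le> u n" and umono: "\<forall>n j. 1 \<le> n \<longrightarrow> n \<le> j \<longrightarrow> u n \<le> u j"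
    and zdef: "\<forall>N. z N = (\<Sum>n=1..N. u n + u n powr \<kappa> + real n powr (-3) * m^n)"
    and wit: "\<forall>N\<ge>N0. \<exists>j>N. u j - 2 * u j powr \<kappa> \<le> (m-1) * z N + c + real (j-N)
                 \<and> \<theta> * u j - 2 * u j powr \<kappa> \<le> (m-1) * z N + c"
  shows "\<exists>B. \<forall>n\<ge>1. u n \<le> B * m^n"
proof -
  obtain C1 where C1: "C1 \<ge> 0" and lin: "\<forall>x\<ge>0. x powr \<kappa> \<le> \<theta>/4*x + C1"
    using powr_le_lin[of \<kappa> "\<theta>/4"] k0 k1 th by auto
  define D where "D = 2/\<theta>*(m-1+c+2*C1) + 1"
  define E where "E = 2*(c+1)+6*D"
  define \<rho> where "\<rho> = (m powr \<kappa>)/m"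
  have Dp: "D \<ge> 1" unfolding D_def using th m2 c0 C1 by simp
  have E0: "E \<ge> 0" unfolding E_def using c0 Dp by simp
  have \<rho>0: "\<rho> \<ge> 0" unfolding \<rho>_def using m2 by simp
  have \<rho>1: "\<rho> < 1"
  proof -
    have "m powr \<kappa> < m powr 1" using m2 k1 by (intro powr_less_mono) auto
    then show ?thesis unfolding \<rho>_def using m2 by simp
  qed
  define P where "P = (\<lambda>N j. N < j \<and> u j - 2 * u j powr \<kappa> \<le> (m-1) * z N + c + real (j-N)
                 \<and> \<theta> * u j - 2 * u j powr \<kappa> \<le> (m-1) * z N + c)"
  define J where "J = (\<lambda>N. SOME j. P N j)"
  have J: "P N (J N)" if "N \<ge> N0" for N
  proof -
    have "\<exists>j. P N j" using wit that unfolding P_def by auto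
    then show ?thesis unfolding J_def by (rule someI_ex)
  qed
  define sq where "sq = (\<lambda>i. (J ^^ i) N0)"
  have sqS: "sq (Suc i) = J (sq i)" for i unfolding sq_def by simp
  have sq_ge: "sq i \<ge> N0 + i" for i
  proof (induction i)
    case 0 then show ?case unfolding sq_def by simp
  next
    case (Suc i)
    have "P (sq i) (sq (Suc i))" unfolding sqS using J Suc by simp
    then show ?case using Suc unfolding P_def by simp
  qed
  have sqP: "P (sq i) (sq (Suc i))" for i unfolding sqS using J sq_ge[of i] by simp
  define r where "r = (\<lambda>i. z (sq i) / m^(sq i))"
  define s where "s = (\<lambda>i. r i + 1/real (sq i))"
  have zN0: "z N \<ge> 0" for N unfolding zdef[rule_format]
    using u0 m2 by (intro sum_nonneg) auto
  have r0: "r i \<ge> 0" for i unfolding r_def using zN0 m2 by simp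
  have s0: "s i \<ge> r i" for i unfolding s_def by simp
  have stepA: "u (sq (Suc i)) \<le> D*(1 + r i)*m^(sq i)"
    and stepB: "s (Suc i) \<le> s i + E*(1 + r i)*\<rho>^(sq i)" for i
  proof -
    have p: "P (sq i) (sq (Suc i))" by (rule sqP)
    have N1: "sq i \<ge> 1" using sq_ge[of i] N0 by simp
    note st = pure_step[of m \<kappa> \<theta> c C1 D "sq i" "sq (Suc i)" u z, OF m2 k0 k1 th c0 C1 lin D_def N1 _ u0 umono zdef]
    have p1: "sq i < sq (Suc i)"
      and p2: "u (sq (Suc i)) - 2 * u (sq (Suc i)) powr \<kappa> \<le> (m-1) * z (sq i) + c + real (sq (Suc i) - sq i)"
      and p3: "\<theta> * u (sq (Suc i)) - 2 * u (sq (Suc i)) powr \<kappa> \<le> (m-1) * z (sq i) + c"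
      using p unfolding P_def by auto
    show "u (sq (Suc i)) \<le> D*(1 + r i)*m^(sq i)" using st(1)[OF p1 p2 p3] unfolding r_def .
    show "s (Suc i) \<le> s i + E*(1 + r i)*\<rho>^(sq i)" using st(2)[OF p1 p2 p3] unfolding r_def s_def E_def \<rho>_def
      by simp
  qed
  have sbound: "1 + s i \<le> (1 + s 0) * exp (E * (\<Sum>k<i. \<rho>^k))" for i
  proof (induction i)
    case 0 then show ?case by simp
  next
    case (Suc i)
    have "\<rho>^(sq i) \<le> \<rho>^i" using sq_ge[of i] \<rho>0 \<rho>1 by (intro power_decreasing) auto
    then have "E*(1 + r i)*\<rho>^(sq i) \<le> E*(1 + s i)*\<rho>^i" using E0 r0[of i] s0[of i] \<rho>0
      by (intro mult_mono) auto
    then have "1 + s (Suc i) \<le> (1 + s i) * (1 + E*\<rho>^i)" using stepB[of i] by (simp add: algebra_simps)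
    also have "\<dots> \<le> (1 + s i) * exp (E*\<rho>^i)" using r0[of i] s0[of i]
      by (intro mult_left_mono exp_ge_add_one_self) auto
    also have "\<dots> \<le> (1 + s 0) * exp (E * (\<Sum>k<i. \<rho>^k)) * exp (E*\<rho>^i)"
      using Suc by (intro mult_right_mono) auto
    also have "\<dots> = (1 + s 0) * exp (E * (\<Sum>k<Suc i. \<rho>^k))"
      by (simp add: exp_add[symmetric] algebra_simps)
    finally show ?case .
  qed
  define B0 where "B0 = (1 + s 0) * exp (E / (1-\<rho>))"
  have rB: "r i \<le> B0" for i
  proof -
    have "(\<Sum>k<i. \<rho>^k) = (1 - \<rho>^i)/(1-\<rho>)" using \<rho>1 by (simp add: sum_gp_strict)
    also have "\<dots> \<le> 1/(1-\<rho>)" using \<rho>0 \<rho>1 by (intro divide_right_mono) auto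
    finally have S: "(\<Sum>k<i. \<rho>^k) \<le> 1/(1-\<rho>)" .
    have "E * (\<Sum>k<i. \<rho>^k) \<le> E * (1/(1-\<rho>))" using S E0 by (rule mult_left_mono)
    then have "E * (\<Sum>k<i. \<rho>^k) \<le> E/(1-\<rho>)" by simp
    then have "exp (E * (\<Sum>k<i. \<rho>^k)) \<le> exp (E/(1-\<rho>))" by simp
    moreover have "1 + s 0 \<ge> 0" using r0[of 0] s0[of 0] by simp
    ultimately have "(1 + s 0) * exp (E * (\<Sum>k<i. \<rho>^k)) \<le> B0" unfolding B0_def
      by (intro mult_left_mono) auto
    moreover have "r i \<le> 1 + s i" using s0[of i] by simp
    ultimately show ?thesis using sbound[of i] by linarith
  qed
  define M0 where "M0 = Max (u ` {1..N0})"
  have M0: "u n \<le> M0" if "n \<in> {1..N0}" for n unfolding M0_def using that by (intro Max_ge) auto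
  have M00: "M0 \<ge> 0" using M0[of 1] u0 N0 by force
  define B where "B = max M0 (D*(1+B0))"
  show ?thesis
  proof (intro exI[of _ B] allI impI)
    fix n :: nat assume n1: "n \<ge> 1"
    have mn1: "m^n \<ge> 1" using m2 by (simp add: one_le_power)
    show "u n \<le> B * m^n"
    proof (cases "n \<le> N0")
      case True
      then have "u n \<le> M0" using M0 n1 by simp
      also have "\<dots> \<le> M0 * m^n" using M00 mn1 by (simp add: mult_le_cancel_left1)
      also have "\<dots> \<le> B * m^n" unfolding B_def using m2 by (intro mult_right_mono) auto
      finally show ?thesis .
    next
      case False
      define i0 where "i0 = (LEAST i. n \<le> sq i)"
      have ex: "n \<le> sq n" using sq_ge[of n] by simp
      have i0a: "n \<le> sq i0" unfolding i0_def by (rule LeastI[of _ n]) (rule ex)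
      have i0p: "i0 \<noteq> 0" using i0a False unfolding sq_def by (cases "i0 = 0") auto
      then obtain i where i: "i0 = Suc i" by (cases i0) auto
      have lt: "\<not> n \<le> sq i" unfolding i0_def
        by (rule not_less_Least) (use i i0_def in simp)
      have "u n \<le> u (sq (Suc i))" using umono n1 i0a i by auto
      also have "\<dots> \<le> D*(1 + r i)*m^(sq i)" by (rule stepA)
      also have "\<dots> \<le> D*(1+B0)*m^n"
      proof -
        have "m^(sq i) \<le> m^n" using lt m2 by (intro power_increasing) auto
        moreover have "D*(1 + r i) \<le> D*(1+B0)" using rB[of i] Dp by (intro mult_left_mono) auto
        ultimately show ?thesis using Dp r0[of i] m2 by (intro mult_mono) auto
      qed
      also have "\<dots> \<le> B * m^n" unfolding B_def using m2 by (intro mult_right_mono) auto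
      finally show ?thesis .
    qed
  qed
qed


lemma prod_diff_bound:
  fixes f g :: "'a \<Rightarrow> real"
  assumes "finite I" "B \<ge> 1" "\<forall>i\<in>I. \<bar>f i\<bar> \<le> B \<and> \<bar>g i\<bar> \<le> B"
  shows "\<bar>prod f I - prod g I\<bar> \<le> B^card I * (\<Sum>i\<in>I. \<bar>f i - g i\<bar>)"
  using assms(1,3)
proof (induction I rule: finite_induct)
  case empty then show ?case by simp
next
  case (insert x F)
  have fx: "\<bar>f x\<bar> \<le> B" and gx: "\<bar>g x\<bar> \<le> B" using insert by auto
  have IH: "\<bar>prod f F - prod g F\<bar> \<le> B^card F * (\<Sum>i\<in>F. \<bar>f i - g i\<bar>)" using insert by auto
  have pg: "\<bar>prod g F\<bar> \<le> B^card F"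
  proof -
    have "\<bar>prod g F\<bar> = (\<Prod>i\<in>F. \<bar>g i\<bar>)" by (simp add: abs_prod)
    also have "\<dots> \<le> (\<Prod>i\<in>F. B)" using insert by (intro prod_mono) auto
    finally show ?thesis by simp
  qed
  have S0: "(\<Sum>i\<in>F. \<bar>f i - g i\<bar>) \<ge> 0" by (intro sum_nonneg) auto
  have BF: "B^card F \<ge> 0" using assms(2) by simp
  have "prod f (insert x F) - prod g (insert x F) = f x * (prod f F - prod g F) + (f x - g x) * prod g F"
    using insert by (simp add: algebra_simps)
  then have "\<bar>prod f (insert x F) - prod g (insert x F)\<bar> \<le> \<bar>f x\<bar> * \<bar>prod f F - prod g F\<bar> + \<bar>f x - g x\<bar> * \<bar>prod g F\<bar>"
    by (simp add: abs_mult[symmetric] abs_triangle_ineq)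
  also have "\<dots> \<le> B * (B^card F * (\<Sum>i\<in>F. \<bar>f i - g i\<bar>)) + \<bar>f x - g x\<bar> * B^card F"
    using fx IH pg by (intro add_mono mult_mono) auto
  also have "\<dots> \<le> B^Suc (card F) * (\<Sum>i\<in>F. \<bar>f i - g i\<bar>) + \<bar>f x - g x\<bar> * B^Suc (card F)"
  proof -
    have "B^card F \<le> B^Suc (card F)" using assms(2) by (intro power_increasing) auto
    then have "\<bar>f x - g x\<bar> * B^card F \<le> \<bar>f x - g x\<bar> * B^Suc (card F)" by (intro mult_left_mono) auto
    then show ?thesis by simp
  qed
  also have "\<dots> = B^card (insert x F) * (\<Sum>i\<in>insert x F. \<bar>f i - g i\<bar>)"
    using insert by (simp add: algebra_simps)
  finally show ?case .
qed

lemma pow_diff_bound: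
  fixes x y B :: real
  assumes "B \<ge> 1" "\<bar>x\<bar> \<le> B" "\<bar>y\<bar> \<le> B"
  shows "\<bar>x^n - y^n\<bar> \<le> B^n * (real n * \<bar>x - y\<bar>)"
  using prod_diff_bound[of "{..<n}" B "\<lambda>_. x" "\<lambda>_. y"] assms by simp

lemma finite_degvecs: "finite (degvecs K d)"
proof -
  have "degvecs K d \<subseteq> (\<lambda>f k. if k \<in> {1..K} then f k else 0) ` (PiE {1..K} (\<lambda>_. {0..d}))"
  proof
    fix e assume e: "e \<in> degvecs K d"
    then have sup: "\<forall>k. e k \<noteq> 0 \<longrightarrow> k \<in> {1..K}" and sd: "(\<Sum>k=1..K. e k) \<le> d"
      unfolding degvecs_def by auto
    have ed: "e k \<le> d" if "k \<in> {1..K}" for k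
    proof -
      have "e k \<le> (\<Sum>k=1..K. e k)" using that by (intro member_le_sum) auto
      then show ?thesis using sd by simp
    qed
    have "restrict e {1..K} \<in> PiE {1..K} (\<lambda>_. {0..d})" using ed by auto
    moreover have "e = (\<lambda>k. if k \<in> {1..K} then restrict e {1..K} k else 0)"
      using sup by (auto simp: fun_eq_iff)
    ultimately show "e \<in> (\<lambda>f k. if k \<in> {1..K} then f k else 0) ` (PiE {1..K} (\<lambda>_. {0..d}))" by blast
  qed
  moreover have "finite (PiE {1..K} (\<lambda>_. {0..d::nat}))" by (intro finite_PiE) auto
  ultimately show ?thesis using finite_subset by blast
qed

lemma degvecs_le: "e \<in> degvecs K d \<Longrightarrow> k \<in> {1..K} \<Longrightarrow> e k \<le> d"
proof -
  assume e: "e \<in> degvecs K d" and k: "k \<in> {1..K}"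
  have "e k \<le> (\<Sum>k=1..K. e k)" using k by (intro member_le_sum) auto
  then show ?thesis using e unfolding degvecs_def by simp
qed

lemma mpoly_lip:
  fixes R :: real
  assumes R1: "R \<ge> 1"
  shows "\<exists>L\<ge>0. \<forall>x y. (\<forall>k\<in>{1..K}. \<bar>x k\<bar> \<le> R \<and> \<bar>y k\<bar> \<le> R) \<longrightarrow>
     \<bar>mpoly_eval K d c x - mpoly_eval K d c y\<bar> \<le> L * (\<Sum>k=1..K. \<bar>x k - y k\<bar>)"
proof -
  define M where "M = (R^d)^K * (R^d * real d)"
  define L where "L = (\<Sum>e\<in>degvecs K d. \<bar>real_of_int (c e)\<bar>) * M"
  have M0: "M \<ge> 0" unfolding M_def using R1 by simp
  have Rd: "R^d \<ge> 1" using R1 by (simp add: one_le_power)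
  show ?thesis
  proof (intro exI[of _ L] conjI allI impI)
    show "L \<ge> 0" unfolding L_def using M0 by (intro mult_nonneg_nonneg sum_nonneg) auto
    fix x y :: "nat \<Rightarrow> real"
    assume xy: "\<forall>k\<in>{1..K}. \<bar>x k\<bar> \<le> R \<and> \<bar>y k\<bar> \<le> R"
    define S where "S = (\<Sum>k=1..K. \<bar>x k - y k\<bar>)"
    have mono: "\<bar>(\<Prod>k=1..K. x k ^ e k) - (\<Prod>k=1..K. y k ^ e k)\<bar> \<le> M * S"
      if e: "e \<in> degvecs K d" for e
    proof -
      have pb: "\<bar>z ^ e k\<bar> \<le> R^d" if "k \<in> {1..K}" "\<bar>z\<bar> \<le> R" for z k
      proof -
        have "\<bar>z ^ e k\<bar> \<le> R ^ e k" using that by (simp add: power_abs power_mono)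
        also have "\<dots> \<le> R^d" using degvecs_le[OF e that(1)] R1 by (intro power_increasing) auto
        finally show ?thesis .
      qed
      have "\<bar>(\<Prod>k=1..K. x k ^ e k) - (\<Prod>k=1..K. y k ^ e k)\<bar> \<le> (R^d)^card {1..K} * (\<Sum>k=1..K. \<bar>x k ^ e k - y k ^ e k\<bar>)"
        using xy pb Rd by (intro prod_diff_bound) auto
      also have "\<dots> \<le> (R^d)^K * (\<Sum>k=1..K. R^d * real d * \<bar>x k - y k\<bar>)"
      proof -
        have "\<bar>x k ^ e k - y k ^ e k\<bar> \<le> R^d * real d * \<bar>x k - y k\<bar>" if k: "k \<in> {1..K}" for k
        proof -
          have "\<bar>x k ^ e k - y k ^ e k\<bar> \<le> R^(e k) * (real (e k) * \<bar>x k - y k\<bar>)"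
            using xy k R1 by (intro pow_diff_bound) auto
          also have "\<dots> \<le> R^d * (real d * \<bar>x k - y k\<bar>)"
          proof -
            have p: "R^(e k) \<le> R^d" using degvecs_le[OF e k] R1 by (intro power_increasing) auto
            have q: "real (e k) * \<bar>x k - y k\<bar> \<le> real d * \<bar>x k - y k\<bar>"
              using degvecs_le[OF e k] by (intro mult_right_mono) auto
            have r0: "0 \<le> R^d" using R1 by simp
            have r1: "0 \<le> real (e k) * \<bar>x k - y k\<bar>" by simp
            show ?thesis by (rule mult_mono[OF p q r0 r1])
          qed
          finally show ?thesis by (simp add: mult.assoc)
        qed
        then have "(\<Sum>k=1..K. \<bar>x k ^ e k - y k ^ e k\<bar>) \<le> (\<Sum>k=1..K. R^d * real d * \<bar>x k - y k\<bar>)"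
          by (intro sum_mono) auto
        then have "(R^d)^card {1..K} * (\<Sum>k=1..K. \<bar>x k ^ e k - y k ^ e k\<bar>) \<le> (R^d)^card {1..K} * (\<Sum>k=1..K. R^d * real d * \<bar>x k - y k\<bar>)"
          using Rd by (intro mult_left_mono) auto
        then show ?thesis by simp
      qed
      also have "\<dots> = M * S" unfolding M_def S_def by (simp add: sum_distrib_left algebra_simps)
      finally show ?thesis .
    qed
    have "mpoly_eval K d c x - mpoly_eval K d c y =
       (\<Sum>e\<in>degvecs K d. real_of_int (c e) * ((\<Prod>k=1..K. x k ^ e k) - (\<Prod>k=1..K. y k ^ e k)))"
      unfolding mpoly_eval_def by (simp add: sum_subtractf right_diff_distrib)
    then have "\<bar>mpoly_eval K d c x - mpoly_eval K d c y\<bar> \<le>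
       (\<Sum>e\<in>degvecs K d. \<bar>real_of_int (c e) * ((\<Prod>k=1..K. x k ^ e k) - (\<Prod>k=1..K. y k ^ e k))\<bar>)"
      by (simp only: sum_abs)
    also have "\<dots> = (\<Sum>e\<in>degvecs K d. \<bar>real_of_int (c e)\<bar> * \<bar>(\<Prod>k=1..K. x k ^ e k) - (\<Prod>k=1..K. y k ^ e k)\<bar>)"
      by (simp add: abs_mult)
    also have "\<dots> \<le> (\<Sum>e\<in>degvecs K d. \<bar>real_of_int (c e)\<bar> * (M * S))"
      using mono by (intro sum_mono mult_left_mono) auto
    also have "\<dots> = L * S" unfolding L_def by (simp add: sum_distrib_right mult.assoc)
    finally show "\<bar>mpoly_eval K d c x - mpoly_eval K d c y\<bar> \<le> L * (\<Sum>k=1..K. \<bar>x k - y k\<bar>)"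
      unfolding S_def .
  qed
qed

lemma pa_int:
  assumes "\<forall>n\<in>{1..N}. a k n \<noteq> 0"
  shows "partial_alpha a b k N * real_of_int (\<Prod>n=1..N. a k n) \<in> \<int>"
proof -
  have "partial_alpha a b k N * real_of_int (\<Prod>n=1..N. a k n) =
      (\<Sum>n=1..N. real_of_int (b k n) / real_of_int (a k n) * real_of_int (\<Prod>m=1..N. a k m))"
    unfolding partial_alpha_def by (simp add: sum_distrib_right)
  also have "\<dots> \<in> \<int>"
  proof (intro Ints_sum)
    fix n assume n: "n \<in> {1..N}"
    have "(\<Prod>m=1..N. a k m) = a k n * (\<Prod>m\<in>{1..N}-{n}. a k m)" using n by (simp add: prod.remove)
    then have eq: "real_of_int (b k n) / real_of_int (a k n) * real_of_int (\<Prod>m=1..N. a k m)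
       = real_of_int (b k n * (\<Prod>m\<in>{1..N}-{n}. a k m))" using assms n by simp
    show "real_of_int (b k n) / real_of_int (a k n) * real_of_int (\<Prod>m=1..N. a k m) \<in> \<int>"
      by (subst eq) (rule Ints_of_int)
  qed
  finally show ?thesis .
qed

lemma mpoly_int:
  fixes q :: "nat \<Rightarrow> int" and x :: "nat \<Rightarrow> real"
  assumes "\<forall>k\<in>{1..K}. x k * real_of_int (q k) \<in> \<int>"
  shows "real_of_int (\<Prod>k=1..K. q k)^d * mpoly_eval K d c x \<in> \<int>"
proof -
  have "real_of_int (\<Prod>k=1..K. q k)^d * mpoly_eval K d c x =
     (\<Sum>e\<in>degvecs K d. real_of_int (c e) * (\<Prod>k=1..K. (x k * real_of_int (q k))^e k * real_of_int (q k)^(d - e k)))"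
    unfolding mpoly_eval_def sum_distrib_left
  proof (intro sum.cong refl)
    fix e assume e: "e \<in> degvecs K d"
    have h1: "real_of_int (\<Prod>k=1..K. q k)^d = (\<Prod>k=1..K. real_of_int (q k)^e k * real_of_int (q k)^(d - e k))"
    proof -
      have "real_of_int (\<Prod>k=1..K. q k)^d = (\<Prod>k=1..K. real_of_int (q k)^d)"
        by (simp add: prod_power_distrib)
      also have "\<dots> = (\<Prod>k=1..K. real_of_int (q k)^e k * real_of_int (q k)^(d - e k))"
      proof (rule prod.cong[OF refl])
        fix k assume k: "k \<in> {1..K}"
        have "d = e k + (d - e k)" using degvecs_le[OF e k] by simp
        then show "real_of_int (q k)^d = real_of_int (q k)^e k * real_of_int (q k)^(d - e k)"
          by (metis power_add)
      qed
      finally show ?thesis .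
    qed
    have h2: "(\<Prod>k=1..K. real_of_int (q k)^e k * real_of_int (q k)^(d - e k)) * (\<Prod>k=1..K. x k ^ e k)
        = (\<Prod>k=1..K. (x k * real_of_int (q k))^e k * real_of_int (q k)^(d - e k))"
      by (subst prod.distrib[symmetric]) (rule prod.cong, auto simp: power_mult_distrib mult_ac)
    show "real_of_int (\<Prod>k=1..K. q k)^d * (real_of_int (c e) * (\<Prod>k=1..K. x k ^ e k))
       = real_of_int (c e) * (\<Prod>k=1..K. (x k * real_of_int (q k))^e k * real_of_int (q k)^(d - e k))"
      unfolding h1 h2[symmetric] by (simp add: mult_ac)
  qed
  also have "\<dots> \<in> \<int>"
  proof (rule Ints_sum)
    fix e assume e: "e \<in> degvecs K d"
    show "real_of_int (c e) * (\<Prod>k=1..K. (x k * real_of_int (q k))^e k * real_of_int (q k)^(d - e k)) \<in> \<int>"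
    proof (rule Ints_mult[OF Ints_of_int], rule Ints_prod)
      fix k assume k: "k \<in> {1..K}"
      have h: "x k * real_of_int (q k) \<in> \<int>" using assms k by auto
      show "(x k * real_of_int (q k))^e k * real_of_int (q k)^(d - e k) \<in> \<int>"
        by (rule Ints_mult[OF Ints_power[OF h] Ints_power[OF Ints_of_int]])
    qed
  qed
  finally show ?thesis .
qed

lemma tail_bound:
  fixes pa f w :: "nat \<Rightarrow> real"
  assumes lim: "pa \<longlonglongrightarrow> \<alpha>"
    and ps: "\<forall>M\<ge>N. pa M - pa N = (\<Sum>n=Suc N..M. f n)"
    and fw: "\<forall>n>N. \<bar>f n\<bar> \<le> w n"
    and wW: "\<forall>M. (\<Sum>n=Suc N..M. w n) \<le> W"
  shows "\<bar>\<alpha> - pa N\<bar> \<le> W"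
proof -
  have "(\<lambda>M. \<bar>pa M - pa N\<bar>) \<longlonglongrightarrow> \<bar>\<alpha> - pa N\<bar>" using lim by (intro tendsto_intros)
  moreover have "\<forall>M\<ge>N. \<bar>pa M - pa N\<bar> \<le> W"
  proof (intro allI impI)
    fix M assume M: "M \<ge> N"
    have "\<bar>pa M - pa N\<bar> = \<bar>\<Sum>n=Suc N..M. f n\<bar>" using ps M by simp
    also have "\<dots> \<le> (\<Sum>n=Suc N..M. \<bar>f n\<bar>)" by (rule sum_abs)
    also have "\<dots> \<le> (\<Sum>n=Suc N..M. w n)" using fw by (intro sum_mono) auto
    also have "\<dots> \<le> W" using wW by simp
    finally show "\<bar>pa M - pa N\<bar> \<le> W" .
  qed
  ultimately show ?thesis by (intro LIMSEQ_le_const2) auto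
qed

lemma pa_diff:
  assumes "N \<le> M"
  shows "partial_alpha a b k M - partial_alpha a b k N = (\<Sum>n=Suc N..M. real_of_int (b k n) / real_of_int (a k n))"
proof -
  have "M = N + (M - N)" using assms by simp
  then have "partial_alpha a b k M = partial_alpha a b k (N + (M-N))" by simp
  also have "\<dots> = partial_alpha a b k N + (\<Sum>n=N+1..N+(M-N). real_of_int (b k n) / real_of_int (a k n))"
    unfolding partial_alpha_def by (rule sum.ub_add_nat) simp
  finally show ?thesis using assms by simp
qed

lemma geo_tail: "N \<le> M \<Longrightarrow> (\<Sum>n=Suc N..M. (1/2::real)^(n-N)) = 1 - (1/2)^(M-N)"
proof (induction M rule: dec_induct)
  case base then show ?case by simp
next
  case (step M)
  have "{Suc N..Suc M} = insert (Suc M) {Suc N..M}" using step by auto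
  then have "(\<Sum>n=Suc N..Suc M. (1/2::real)^(n-N)) = (1/2)^(Suc M - N) + (\<Sum>n=Suc N..M. (1/2::real)^(n-N))" by simp
  also have "\<dots> = (1/2)^(Suc M - N) + (1 - (1/2)^(M-N))" using step.IH by simp
  also have "\<dots> = 1 - (1/2)^(Suc M - N)"
  proof -
    have e: "Suc M - N = Suc (M - N)" using step by simp
    show ?thesis unfolding e by simp
  qed
  finally show ?case .
qed


theorem lemma8:
  fixes d K :: nat and a b :: "nat \<Rightarrow> nat \<Rightarrow> int" and A :: "nat \<Rightarrow> int"
    and \<epsilon> \<kappa> :: real and c :: "(nat \<Rightarrow> nat) \<Rightarrow> int"
  assumes "d > 0" and "K > 0"
    and nz: "\<And>k n. k \<in> {1..K} \<Longrightarrow> n \<ge> 1 \<Longrightarrow> a k n \<noteq> 0 \<and> b k n \<noteq> 0"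
    and conv: "\<And>k. k \<in> {1..K} \<Longrightarrow> convergent (partial_alpha a b k)"
    and "\<epsilon> > 0" and "\<kappa> > 0" and "\<kappa> < 1"
    and A_low: "\<And>n. n \<ge> 1 \<Longrightarrow> real n powr (1 + \<epsilon>) \<le> A n \<and> A n \<le> A (n + 1)"
    and a_low: "\<And>k n. k \<in> {1..K} \<Longrightarrow> n \<ge> 1 \<Longrightarrow>
        A n * 2 powr (- ((log 2 (A n)) powr \<kappa>)) \<le> \<bar>a k n\<bar>"
    and a_up: "\<And>k n. k \<in> {1..K} \<Longrightarrow> n \<ge> 1 \<Longrightarrow>
        \<bar>a k n\<bar> \<le> max (A n * 2 powr ((log 2 (A n)) powr \<kappa>))
                          (2 powr (real n powr (-3) * real (K * d + 1) ^ n))"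
    and b_up: "\<And>k n. k \<in> {1..K} \<Longrightarrow> n \<ge> 1 \<Longrightarrow> \<bar>b k n\<bar> \<le> 2 powr ((log 2 (A n)) powr \<kappa>)"
    and limsup: "limsup (\<lambda>n. ereal (real_of_int (A n) powr (1 / real (K * d + 1) ^ n))) = \<infinity>"
    and ev: "\<forall>\<^sub>F N in sequentially. mpoly_eval K d c (\<lambda>k. partial_alpha a b k N) \<noteq> 0"
  shows "mpoly_eval K d c (\<lambda>k. lim (partial_alpha a b k)) \<noteq> 0"
proof
  assume P0: "mpoly_eval K d c (\<lambda>k. lim (partial_alpha a b k)) = 0"
  note d0 = \<open>d > 0\<close> and K0 = \<open>K > 0\<close> and e0 = \<open>\<epsilon> > 0\<close> and k0 = \<open>\<kappa> > 0\<close> and k1 = \<open>\<kappa> < 1\<close>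
  define m where "m = real (K*d+1)"
  have m2: "m \<ge> 2"
  proof -
    have "K*d \<ge> 1" using d0 K0 by (simp add: Suc_le_eq)
    then have "real (K*d) \<ge> 1" by linarith
    moreover have "m = real (K*d) + 1" unfolding m_def by simp
    ultimately show ?thesis by linarith
  qed
  have mK: "m - 1 = real K * real d" unfolding m_def by simp
  define u where "u = (\<lambda>n. log 2 (real_of_int (A n)))"
  define \<alpha> where "\<alpha> = (\<lambda>k. lim (partial_alpha a b k))"
  have lim: "partial_alpha a b k \<longlonglongrightarrow> \<alpha> k" if "k \<in> {1..K}" for k
    unfolding \<alpha>_def using conv[OF that] by (simp add: convergent_LIMSEQ_iff)
  have Age1: "real_of_int (A n) \<ge> 1" if "n \<ge> 1" for n
  proof -
    have "1 \<le> real n powr (1 + \<epsilon>)" using that e0 by (intro ge_one_powr_ge_zero) auto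
    then show ?thesis using A_low[OF that] by linarith
  qed
  have A2u: "2 powr u n = real_of_int (A n)" if "n \<ge> 1" for n
    unfolding u_def using Age1[OF that] by (intro powr_log_cancel) auto
  have u0: "u n \<ge> 0" if "n \<ge> 1" for n
    unfolding u_def using Age1[OF that] by (subst zero_le_log_cancel_iff) auto
  have ulog: "(1+\<epsilon>) * log 2 (real n) \<le> u n" if "n \<ge> 1" for n
  proof -
    have "log 2 (real n powr (1+\<epsilon>)) \<le> u n" unfolding u_def using A_low[OF that] that
      by (intro log_mono) auto
    then show ?thesis by (simp add: log_powr)
  qed
  have Amono: "real_of_int (A n) \<le> real_of_int (A j)" if "1 \<le> n" "n \<le> j" for n j
    using that(2)
  proof (induction j rule: dec_induct)
    case base then show ?case by simp
  next
    case (step j)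
    have "A j \<le> A (j+1)" using A_low[of j] step that by simp
    then show ?case using step by simp
  qed
  have umono: "\<forall>n j. 1 \<le> n \<longrightarrow> n \<le> j \<longrightarrow> u n \<le> u j"
  proof (intro allI impI)
    fix n j :: nat assume h: "1 \<le> n" "n \<le> j"
    show "u n \<le> u j" unfolding u_def using Amono[OF h] Age1[OF h(1)] by (intro log_mono) auto
  qed
  define L where "L = (\<lambda>n. u n powr \<kappa>)"
  have F1: "\<bar>real_of_int (b k n) / real_of_int (a k n)\<bar> \<le> 2 powr (2 * L n - u n)"
    if k: "k \<in> {1..K}" and n: "n \<ge> 1" for k n
  proof -
    have al: "2 powr (u n - L n) \<le> \<bar>real_of_int (a k n)\<bar>"
    proof -
      have "2 powr (u n - L n) = real_of_int (A n) * 2 powr (- L n)"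
        using A2u[OF n] by (simp add: powr_diff powr_minus divide_simps)
      then show ?thesis using a_low[OF k n] unfolding L_def u_def by simp
    qed
    have bl: "\<bar>real_of_int (b k n)\<bar> \<le> 2 powr L n" using b_up[OF k n] unfolding L_def u_def by simp
    have "\<bar>real_of_int (b k n) / real_of_int (a k n)\<bar> = \<bar>real_of_int (b k n)\<bar> / \<bar>real_of_int (a k n)\<bar>"
      by (simp add: abs_divide)
    also have "\<dots> \<le> 2 powr L n / 2 powr (u n - L n)"
      using al bl by (intro frac_le) auto
    also have "\<dots> = 2 powr (2 * L n - u n)" by (simp add: powr_diff[symmetric])
    finally show ?thesis .
  qed
  define wt where "wt = (\<lambda>n. u n + u n powr \<kappa> + real n powr (-3) * m^n)"
  have wt0: "wt n \<ge> 0" if "n \<ge> 1" for n unfolding wt_def using u0[OF that] m2 by simp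
  have Fup: "\<bar>real_of_int (a k n)\<bar> \<le> 2 powr wt n" if k: "k \<in> {1..K}" and n: "n \<ge> 1" for k n
  proof -
    have au: "\<bar>real_of_int (a k n)\<bar> \<le> max (2 powr (u n + L n)) (2 powr (real n powr (-3) * m^n))"
    proof -
      have "real_of_int (A n) * 2 powr (L n) = 2 powr (u n + L n)" using A2u[OF n] by (simp add: powr_add)
      then show ?thesis using a_up[OF k n] unfolding L_def u_def m_def by simp
    qed
    have t0: "real n powr (-3) * m^n \<ge> 0" using m2 by simp
    have L0: "L n \<ge> 0" unfolding L_def by simp
    have f1: "2 powr (u n + L n) \<le> 2 powr wt n" unfolding wt_def L_def using t0 by simp
    have f2: "2 powr (real n powr (-3) * m^n) \<le> 2 powr wt n" unfolding wt_def
      using u0[OF n] L0 unfolding L_def by simp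
    show ?thesis using order_trans[OF au max.boundedI[OF f1 f2]] .
  qed
  have Bk: "\<forall>k. \<exists>R. k \<in> {1..K} \<longrightarrow> R > 0 \<and> (\<forall>N. \<bar>partial_alpha a b k N\<bar> \<le> R)"
  proof
    fix k
    show "\<exists>R. k \<in> {1..K} \<longrightarrow> R > 0 \<and> (\<forall>N. \<bar>partial_alpha a b k N\<bar> \<le> R)"
    proof (cases "k \<in> {1..K}")
      case True
      have "Bseq (partial_alpha a b k)" using conv[OF True] by (rule convergent_imp_Bseq)
      then obtain R where "R > 0" "\<forall>n. norm (partial_alpha a b k n) \<le> R" unfolding Bseq_def by auto
      then show ?thesis by (intro exI[of _ R]) auto
    next
      case False then show ?thesis by auto
    qed
  qed
  obtain Rf where Rf: "\<forall>k. k \<in> {1..K} \<longrightarrow> Rf k > 0 \<and> (\<forall>N. \<bar>partial_alpha a b k N\<bar> \<le> Rf k)"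
    using choice[OF Bk] by blast
  define R where "R = 1 + (\<Sum>k\<in>{1..K}. Rf k)"
  have Rk: "Rf k \<le> R" if "k \<in> {1..K}" for k
  proof -
    have "Rf k \<le> (\<Sum>k\<in>{1..K}. Rf k)" using that Rf by (intro member_le_sum) (auto simp: less_imp_le)
    then show ?thesis unfolding R_def by simp
  qed
  have R1: "R \<ge> 1"
  proof -
    have "0 \<le> (\<Sum>k\<in>{1..K}. Rf k)" using Rf by (intro sum_nonneg) (auto simp: less_imp_le)
    then show ?thesis unfolding R_def by simp
  qed
  have pa_R: "\<bar>partial_alpha a b k N\<bar> \<le> R" if "k \<in> {1..K}" for k N
    using Rf Rk[OF that] that by (meson order_trans)
  have al_R: "\<bar>\<alpha> k\<bar> \<le> R" if k: "k \<in> {1..K}" for k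
  proof -
    have "(\<lambda>N. \<bar>partial_alpha a b k N\<bar>) \<longlonglongrightarrow> \<bar>\<alpha> k\<bar>" using lim[OF k] by (rule tendsto_rabs)
    then show ?thesis using pa_R[OF k] by (intro LIMSEQ_le_const2) auto
  qed
  obtain Lc where Lc0: "Lc \<ge> 0" and Lip: "\<forall>x y. (\<forall>k\<in>{1..K}. \<bar>x k\<bar> \<le> R \<and> \<bar>y k\<bar> \<le> R) \<longrightarrow>
     \<bar>mpoly_eval K d c x - mpoly_eval K d c y\<bar> \<le> Lc * (\<Sum>k=1..K. \<bar>x k - y k\<bar>)"
    using mpoly_lip[OF R1, of K d c] by blast
  have P0': "mpoly_eval K d c \<alpha> = 0" using P0 unfolding \<alpha>_def .
  have LipN: "\<bar>mpoly_eval K d c (\<lambda>k. partial_alpha a b k N)\<bar> \<le> Lc * (\<Sum>k=1..K. \<bar>partial_alpha a b k N - \<alpha> k\<bar>)" for N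
    using Lip[rule_format, of "\<lambda>k. partial_alpha a b k N" \<alpha>] pa_R al_R P0' by simp
  obtain N1 where N1: "\<forall>N\<ge>N1. mpoly_eval K d c (\<lambda>k. partial_alpha a b k N) \<noteq> 0"
    using ev unfolding eventually_sequentially by auto
  define \<eta> where "\<eta> = \<epsilon>/2"
  define \<theta> where "\<theta> = 1 - (1+\<eta>)/(1+\<epsilon>)"
  have th: "\<theta> > 0" unfolding \<theta>_def \<eta>_def using e0 by (simp add: field_simps)
  define pw where "pw = (\<lambda>n::nat. real n powr (-(1+\<eta>)))"
  have pw_sum: "summable pw" unfolding pw_def using e0 \<eta>_def by (subst summable_real_powr_iff) simp
  define Z where "Z = suminf pw"
  have pw0: "pw n \<ge> 0" for n unfolding pw_def by simp
  have pwZ: "(\<Sum>n\<in>F. pw n) \<le> Z" if "finite F" for F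
    unfolding Z_def using pw_sum that pw0 by (intro sum_le_suminf) auto
  have Z1: "Z \<ge> 1" using pwZ[of "{1}"] unfolding pw_def by simp
  define Lc' where "Lc' = Lc + 1"
  have Lc'1: "Lc' \<ge> 1" unfolding Lc'_def using Lc0 by simp
  define cc where "cc = log 2 (2*Lc'*K) + 1 + log 2 Z"
  have KLc: "2*Lc'*real K \<ge> 1"
  proof -
    have "real K \<ge> 1" using K0 by simp
    then have "1*1 \<le> Lc' * real K" using Lc'1 by (intro mult_mono) auto
    then show ?thesis by simp
  qed
  have logZ: "log 2 Z \<ge> 0" using Z1 by (subst zero_le_log_cancel_iff) auto
  have logLK: "log 2 (2*Lc'*K) \<ge> 0" using KLc by (subst zero_le_log_cancel_iff) auto
  have cc0: "cc \<ge> 0" unfolding cc_def using logZ logLK by simp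
  define zf where "zf = (\<lambda>N. \<Sum>n=1..N. wt n)"
  have zf0: "zf N \<ge> 0" for N unfolding zf_def using wt0 by (intro sum_nonneg) auto
  define N0 where "N0 = max N1 1"
  have wit: "\<forall>N\<ge>N0. \<exists>j>N. u j - 2 * u j powr \<kappa> \<le> (m-1) * zf N + cc + real (j-N)
                 \<and> \<theta> * u j - 2 * u j powr \<kappa> \<le> (m-1) * zf N + cc"
  proof (intro allI impI)
    fix N assume NN0: "N \<ge> N0"
    have N1': "N \<ge> N1" and Npos: "N \<ge> 1" using NN0 unfolding N0_def by auto
    define S where "S = log 2 (2*Lc'*K) + (m-1)*zf N"
    define w where "w = (\<lambda>j. ((1/2::real)^(j-N) + pw j / Z)/2)"
    have wpos: "w j > 0" for j unfolding w_def using pw0[of j] Z1 by (simp add: add_pos_nonneg)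
    have ex: "\<exists>j>N. 2 powr (-S) * w j \<le> 2 powr (2 * L j - u j)"
    proof (rule ccontr)
      assume "\<not> ?thesis"
      then have small: "\<forall>j>N. 2 powr (2 * L j - u j) < 2 powr (-S) * w j" by (auto simp: not_le)
      have tail: "\<bar>\<alpha> k - partial_alpha a b k N\<bar> \<le> 2 powr (-S)" if k: "k \<in> {1..K}" for k
      proof (rule tail_bound[where f="\<lambda>n. real_of_int (b k n) / real_of_int (a k n)" and w="\<lambda>n. 2 powr (-S) * w n"])
        show "partial_alpha a b k \<longlonglongrightarrow> \<alpha> k" by (rule lim[OF k])
        show "\<forall>M\<ge>N. partial_alpha a b k M - partial_alpha a b k N = (\<Sum>n=Suc N..M. real_of_int (b k n) / real_of_int (a k n))"
          using pa_diff by auto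
        show "\<forall>n>N. \<bar>real_of_int (b k n) / real_of_int (a k n)\<bar> \<le> 2 powr (-S) * w n"
        proof (intro allI impI)
          fix n assume n: "n > N"
          have "\<bar>real_of_int (b k n) / real_of_int (a k n)\<bar> \<le> 2 powr (2 * L n - u n)"
            using F1[OF k] n Npos by simp
          also have "\<dots> \<le> 2 powr (-S) * w n" using small n by (simp add: less_imp_le)
          finally show "\<bar>real_of_int (b k n) / real_of_int (a k n)\<bar> \<le> 2 powr (-S) * w n" .
        qed
        show "\<forall>M. (\<Sum>n=Suc N..M. 2 powr (-S) * w n) \<le> 2 powr (-S)"
        proof
          fix M
          have g: "(\<Sum>n=Suc N..M. (1/2::real)^(n-N)) \<le> 1"
          proof (cases "N \<le> M")
            case True then show ?thesis by (simp add: geo_tail)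
          next
            case False then show ?thesis by simp
          qed
          have p: "(\<Sum>n=Suc N..M. pw n / Z) \<le> 1"
          proof -
            have "(\<Sum>n=Suc N..M. pw n / Z) = (\<Sum>n=Suc N..M. pw n) / Z" by (simp add: sum_divide_distrib)
            also have "\<dots> \<le> Z / Z" using pwZ[of "{Suc N..M}"] Z1 by (intro divide_right_mono) auto
            finally show ?thesis using Z1 by simp
          qed
          have "(\<Sum>n=Suc N..M. w n) = ((\<Sum>n=Suc N..M. (1/2::real)^(n-N)) + (\<Sum>n=Suc N..M. pw n / Z))/2"
            unfolding w_def by (simp only: sum_divide_distrib[symmetric] sum.distrib)
          then have ws: "(\<Sum>n=Suc N..M. w n) \<le> 1" using g p by simp
          have "(\<Sum>n=Suc N..M. 2 powr (-S) * w n) = 2 powr (-S) * (\<Sum>n=Suc N..M. w n)"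
            by (simp add: sum_distrib_left)
          also have "\<dots> \<le> 2 powr (-S) * 1" using ws by (intro mult_left_mono) auto
          finally show "(\<Sum>n=Suc N..M. 2 powr (-S) * w n) \<le> 2 powr (-S)" by simp
        qed
      qed
      have two: "2 powr (-S) = 1/(2*Lc'*K) * 2 powr (-((m-1)*zf N))"
      proof -
        have "2 powr (-S) = 2 powr (- log 2 (2*Lc'*K)) * 2 powr (-((m-1)*zf N))"
          unfolding S_def by (simp add: powr_add[symmetric])
        also have "2 powr (- log 2 (2*Lc'*K)) = 1/(2*Lc'*K)" using KLc
          by (simp add: powr_minus powr_log_cancel divide_simps)
        finally show ?thesis .
      qed
      have upper: "\<bar>mpoly_eval K d c (\<lambda>k. partial_alpha a b k N)\<bar> \<le> 1/2 * 2 powr (-((m-1)*zf N))"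
      proof -
        have "(\<Sum>k=1..K. \<bar>partial_alpha a b k N - \<alpha> k\<bar>) \<le> (\<Sum>k=1..K. 2 powr (-S))"
          using tail by (intro sum_mono) (simp add: abs_minus_commute)
        also have "\<dots> = real K * 2 powr (-S)" by simp
        finally have sK: "(\<Sum>k=1..K. \<bar>partial_alpha a b k N - \<alpha> k\<bar>) \<le> real K * 2 powr (-S)" .
        have "\<bar>mpoly_eval K d c (\<lambda>k. partial_alpha a b k N)\<bar> \<le> Lc * (real K * 2 powr (-S))"
          using LipN[of N] sK Lc0 by (meson mult_left_mono order_trans)
        also have "\<dots> \<le> Lc' * (real K * 2 powr (-S))" unfolding Lc'_def by (intro mult_right_mono) auto
        also have "\<dots> = 1/2 * 2 powr (-((m-1)*zf N))" unfolding two using KLc Lc'1 K0 by (simp add: field_simps)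
        finally show ?thesis .
      qed
      have lower: "2 powr (-((m-1)*zf N)) \<le> \<bar>mpoly_eval K d c (\<lambda>k. partial_alpha a b k N)\<bar>"
      proof -
        define Q where "Q = (\<Prod>k=1..K. \<Prod>n=1..N. a k n)"
        define Pv where "Pv = mpoly_eval K d c (\<lambda>k. partial_alpha a b k N)"
        have int: "real_of_int Q ^ d * Pv \<in> \<int>" unfolding Q_def Pv_def
          by (rule mpoly_int) (use pa_int nz in auto)
        have Pne: "Pv \<noteq> 0" unfolding Pv_def using N1 N1' by auto
        have Qne: "Q \<noteq> 0" unfolding Q_def using nz by (auto simp: prod_zero_iff)
        have ge1: "1 \<le> \<bar>real_of_int Q ^ d * Pv\<bar>" using int Pne Qne by (intro Ints_nonzero_abs_ge1) auto
        have Qb: "\<bar>real_of_int Q\<bar> \<le> 2 powr (real K * zf N)"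
        proof -
          have "\<bar>real_of_int Q\<bar> = (\<Prod>k=1..K. \<Prod>n=1..N. \<bar>real_of_int (a k n)\<bar>)"
            unfolding Q_def by (simp add: abs_prod)
          also have "\<dots> \<le> (\<Prod>k=1..K. \<Prod>n=1..N. 2 powr wt n)"
            using Fup by (intro prod_mono conjI prod_nonneg) auto
          also have "\<dots> = (\<Prod>k=1..K. 2 powr zf N)" unfolding zf_def by (simp add: powr_sum)
          also have "\<dots> = 2 powr (real K * zf N)" by (simp add: powr_power)
          finally show ?thesis .
        qed
        have Qd: "\<bar>real_of_int Q\<bar>^d \<le> 2 powr ((m-1)*zf N)"
        proof -
          have "\<bar>real_of_int Q\<bar>^d \<le> (2 powr (real K * zf N))^d" using Qb by (intro power_mono) auto
          also have "\<dots> = 2 powr ((m-1)*zf N)" unfolding mK by (simp add: powr_power mult_ac)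
          finally show ?thesis .
        qed
        have "1 \<le> \<bar>real_of_int Q\<bar>^d * \<bar>Pv\<bar>" using ge1 by (simp add: abs_mult power_abs)
        also have "\<dots> \<le> 2 powr ((m-1)*zf N) * \<bar>Pv\<bar>" using Qd by (intro mult_right_mono) auto
        finally have "1 \<le> 2 powr ((m-1)*zf N) * \<bar>Pv\<bar>" .
        then have "1 / 2 powr ((m-1)*zf N) \<le> \<bar>Pv\<bar>" by (simp add: divide_simps mult.commute)
        then show ?thesis unfolding Pv_def by (simp add: powr_minus divide_simps)
      qed
      have "2 powr (-((m-1)*zf N)) > 0" by simp
      then show False using upper lower by linarith
    qed
    then obtain j where jN: "j > N" and hj: "2 powr (-S) * w j \<le> 2 powr (2 * L j - u j)" by auto
    have j1: "j \<ge> 1" using jN by simp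
    have lg: "-S + log 2 (w j) \<le> 2 * L j - u j"
    proof -
      have "log 2 (2 powr (-S) * w j) \<le> log 2 (2 powr (2 * L j - u j))"
        using hj wpos[of j] by (intro log_mono) auto
      then show ?thesis using wpos[of j] by (simp add: log_mult)
    qed
    have lw1: "log 2 (w j) \<ge> - real (j-N) - 1"
    proof -
      have "(1/2::real)^(j-N)/2 \<le> w j" unfolding w_def using pw0[of j] Z1 by (simp add: divide_right_mono)
      then have "log 2 ((1/2::real)^(j-N)/2) \<le> log 2 (w j)" by (intro log_mono) auto
      moreover have "log 2 ((1/2::real)^(j-N)/2) = - real (j-N) - 1"
        by (simp add: log_divide log_nat_power)
      ultimately show ?thesis by simp
    qed
    have lw2: "log 2 (w j) \<ge> - (1+\<eta>) * log 2 (real j) - log 2 Z - 1"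
    proof -
      have pwp: "pw j > 0" unfolding pw_def using j1 by simp
      have "pw j / Z / 2 \<le> w j" unfolding w_def by (simp add: divide_right_mono)
      then have "log 2 (pw j / Z / 2) \<le> log 2 (w j)" using pwp Z1 by (intro log_mono) auto
      moreover have "log 2 (pw j / Z / 2) = - (1+\<eta>) * log 2 (real j) - log 2 Z - 1"
        using pwp Z1 unfolding pw_def by (simp add: log_divide log_powr log_mult)
      ultimately show ?thesis by simp
    qed
    have i: "u j - 2 * u j powr \<kappa> \<le> (m-1) * zf N + cc + real (j-N)"
      using lg lw1 logZ unfolding S_def cc_def L_def by linarith
    have ii0: "u j - 2 * L j \<le> (m-1) * zf N + cc + (1+\<eta>) * log 2 (real j)"
      using lg lw2 unfolding S_def cc_def by linarith
    have eta: "(1+\<eta>) * log 2 (real j) \<le> (1+\<eta>)/(1+\<epsilon>) * u j"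
    proof -
      have "(1+\<eta>)/(1+\<epsilon>) * ((1+\<epsilon>) * log 2 (real j)) \<le> (1+\<eta>)/(1+\<epsilon>) * u j"
        using ulog[OF j1] e0 \<eta>_def by (intro mult_left_mono) auto
      then show ?thesis using e0 by simp
    qed
    have ii: "\<theta> * u j - 2 * u j powr \<kappa> \<le> (m-1) * zf N + cc"
    proof -
      have "\<theta> * u j = u j - (1+\<eta>)/(1+\<epsilon>) * u j" unfolding \<theta>_def by (simp add: algebra_simps)
      then show ?thesis using ii0 eta unfolding L_def by linarith
    qed
    show "\<exists>j>N. u j - 2 * u j powr \<kappa> \<le> (m-1) * zf N + cc + real (j-N)
                 \<and> \<theta> * u j - 2 * u j powr \<kappa> \<le> (m-1) * zf N + cc"
      using jN i ii by blast
  qed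
  have zdef: "\<forall>N. zf N = (\<Sum>n=1..N. u n + u n powr \<kappa> + real n powr (-3) * m^n)"
    unfolding zf_def wt_def by simp
  have u0': "\<forall>n\<ge>1. 0 \<le> u n" using u0 by simp
  have N0': "N0 \<ge> 1" unfolding N0_def by simp
  obtain B where B: "\<forall>n\<ge>1. u n \<le> B * m^n"
    using pure[OF m2 k0 k1 th cc0 N0' u0' umono zdef wit] by blast
  have bnd: "real_of_int (A n) powr (1 / real (K*d+1)^n) \<le> 2 powr B" if n: "n \<ge> 1" for n
  proof -
    have mnp: "m^n > 0" using m2 by simp
    have "2 powr u n \<le> 2 powr (B*m^n)" using B n by simp
    then have "(2 powr u n) powr (1/m^n) \<le> (2 powr (B*m^n)) powr (1/m^n)"
      using mnp by (intro powr_mono2) auto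
    also have "\<dots> = 2 powr B" using m2 by (simp add: powr_powr)
    finally show ?thesis using A2u[OF n] unfolding m_def by simp
  qed
  have "limsup (\<lambda>n. ereal (real_of_int (A n) powr (1 / real (K * d + 1) ^ n))) \<le> ereal (2 powr B)"
    by (intro Limsup_bounded) (use bnd in \<open>auto simp: eventually_sequentially\<close>)
  then show False using limsup by simp
qed

end
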